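(* Let $S$ be a sticky tree and let $F$ be the forest obtained by deleting the root of $S$, i.e. the ordered list (left to right) of the subtrees rooted at the children of the root of $S$. Define $f(v)=c(v)-1$ for every node $v$ of $F$, where $c$ is the certificate-counting function of $S$. Then $f$ is a closed flow on $F$.
   Context: Sticky trees: a plane tree is a rooted tree in which the children of every node are linearly ordered (left to right). The root has depth $0$, a child of a node of depth $d$ has depth $d+1$. The prefix order is: the root, followed by the prefix order of the subtree of its leftmost child, then of its second child, and so on. $S_u$ denotes the subtree rooted at $u$. A sticky tree is a plane tree $S$ with node set $V$ and a labeling $\ell:V\to\mathbb{N}$ such that: (1) every node $u$ of depth $d$ has $0\le\ell(u)\le d$; (2) every node $u$ of depth $d>0$ has some $v\in S_u$ (possibly $v=u$) with $\ell(v)<d$; (3) for every node $u$ of depth $d$, if some $v\in S_u$ has $\ell(v)=d$, then every node of $S_u$ (including $u$) preceding $v$ in prefix order has label at least $d$. The certificate of a non-root node $u$ of depth $d$ is the first node, in prefix order, of $S_u$ whose label is $<d$. The certificate-counting function $c:V\to\mathbb{N}$ assigns to each node $w$ the number of non-root nodes whose certificate is $w$. Flows: a forest is an ordered list $(A_1,\dots,A_k)$ of plane trees. A flow on a forest $F$ is an integer-valued function $f$ on its nodes with $f(v)\ge -1$ for every node $v$ and such that the outgoing rate of every node is nonnegative, where the outgoing rate of $v$ is $\sum_{w} f(w)$ over all nodes $w$ of the subtree of $F$ rooted at $v$ (including $v$). A flow is closed if the outgoing rate of the root of every $A_i$ is $0$. *)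

theory Defs
  imports Main "HOL-Library.Sublist"
begin

text \<open>Plane trees: each node has an ordered list of children.
  Nodes are addressed by positions (paths of child indices from the root);
  the root is [], the depth of a node is the length of its position.\<close>
datatype ptree = Node "ptree list"

fun children :: "ptree \<Rightarrow> ptree list" where
  "children (Node ts) = ts"

lemma size_nth_less: "i < length ts \<Longrightarrow> size (ts ! i) < Suc (size_list size ts)"
  by (metis le_imp_less_Suc nth_mem order_refl size_list_estimation')

function pos :: "ptree \<Rightarrow> nat list set" where
  "pos (Node ts) = insert [] (\<Union>i\<in>{..<length ts}. (#) i ` pos (ts ! i))"
  by pat_completeness auto
termination by (relation "measure size") (auto intro: size_nth_less)

function subtree_at :: "ptree \<Rightarrow> nat list \<Rightarrow> ptree" where
  "subtree_at t [] = t"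
| "subtree_at (Node ts) (i # p) = (if i < length ts then subtree_at (ts ! i) p else Node [])"
  by pat_completeness auto
termination by (relation "measure (size \<circ> fst)") (auto intro: size_nth_less)

function preorder :: "ptree \<Rightarrow> nat list list" where
  "preorder (Node ts) =
     [] # concat (map (\<lambda>i. map ((#) i) (preorder (ts ! i))) [0..<length ts])"
  by pat_completeness auto
termination by (relation "measure size") (auto intro: size_nth_less)

definition sub_preorder :: "ptree \<Rightarrow> nat list \<Rightarrow> nat list list" where
  "sub_preorder t u = map ((@) u) (preorder (subtree_at t u))"

definition sub_nodes :: "ptree \<Rightarrow> nat list \<Rightarrow> nat list set" where
  "sub_nodes t u = (@) u ` pos (subtree_at t u)"

definition precedes_in :: "'a list \<Rightarrow> 'a \<Rightarrow> 'a \<Rightarrow> bool" where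
  "precedes_in xs a b \<longleftrightarrow> (\<exists>i j. i < j \<and> j < length xs \<and> xs ! i = a \<and> xs ! j = b)"

definition sticky :: "ptree \<Rightarrow> (nat list \<Rightarrow> nat) \<Rightarrow> bool" where
  "sticky S l \<longleftrightarrow>
     (\<forall>u\<in>pos S. l u \<le> length u) \<and>
     (\<forall>u\<in>pos S. u \<noteq> [] \<longrightarrow> (\<exists>v\<in>sub_nodes S u. l v < length u)) \<and>
     (\<forall>u\<in>pos S. \<forall>v\<in>sub_nodes S u. l v = length u \<longrightarrow>
        (\<forall>w\<in>sub_nodes S u. precedes_in (sub_preorder S u) w v \<longrightarrow> l w \<ge> length u))"

definition certificate :: "ptree \<Rightarrow> (nat list \<Rightarrow> nat) \<Rightarrow> nat list \<Rightarrow> nat list" where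
  "certificate S l u = hd (filter (\<lambda>v. l v < length u) (sub_preorder S u))"

definition cert_count :: "ptree \<Rightarrow> (nat list \<Rightarrow> nat) \<Rightarrow> nat list \<Rightarrow> nat" where
  "cert_count S l w = card {u \<in> pos S. u \<noteq> [] \<and> certificate S l u = w}"

text \<open>Forests: ordered lists of plane trees. Node p of the i-th tree A_i is addressed as i # p.\<close>
definition forest_nodes :: "ptree list \<Rightarrow> nat list set" where
  "forest_nodes F = {i # p | i p. i < length F \<and> p \<in> pos (F ! i)}"

definition out_rate :: "ptree list \<Rightarrow> (nat list \<Rightarrow> int) \<Rightarrow> nat list \<Rightarrow> int" where
  "out_rate F f v = (\<Sum>w\<in>{w \<in> forest_nodes F. prefix v w}. f w)"

definition is_flow :: "ptree list \<Rightarrow> (nat list \<Rightarrow> int) \<Rightarrow> bool" where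
  "is_flow F f \<longleftrightarrow> (\<forall>v\<in>forest_nodes F. f v \<ge> -1 \<and> out_rate F f v \<ge> 0)"

definition is_closed_flow :: "ptree list \<Rightarrow> (nat list \<Rightarrow> int) \<Rightarrow> bool" where
  "is_closed_flow F f \<longleftrightarrow> is_flow F f \<and> (\<forall>i < length F. out_rate F f [i] = 0)"

end

theory Submission
  imports Defs
begin

lemma set_preorder: "set (preorder t) = pos t"
  by (induction t rule: preorder.induct) (auto simp: image_iff)

lemma finite_pos: "finite (pos t)"
  by (induction t rule: pos.induct) auto

lemma pos_append: "u \<in> pos t \<Longrightarrow> (u @ p \<in> pos t \<longleftrightarrow> p \<in> pos (subtree_at t u))"
proof (induction u arbitrary: t)
  case Nil then show ?case by simp
next
  case (Cons i u)
  obtain ts where t: "t = Node ts" by (cases t)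
  from Cons.prems t have i: "i < length ts" and u: "u \<in> pos (ts ! i)" by auto
  have "(i # u) @ p \<in> pos t \<longleftrightarrow> u @ p \<in> pos (ts ! i)" using t i by auto
  also have "\<dots> \<longleftrightarrow> p \<in> pos (subtree_at (ts!i) u)" using Cons.IH[OF u] .
  finally show ?case using t i by simp
qed

lemma root_pos: "[] \<in> pos t"
  by (cases t) auto

lemma sub_nodes_eq: "u \<in> pos t \<Longrightarrow> sub_nodes t u = {v \<in> pos t. prefix u v}"
  unfolding sub_nodes_def using pos_append[of u t] by (auto simp: prefix_def)

lemma forest_nodes_eq: "forest_nodes (children S) = pos S - {[]}"
  by (cases S) (auto simp: forest_nodes_def)

lemma cert_props:
  assumes "sticky S l" "u \<in> pos S" "u \<noteq> []"
  shows "certificate S l u \<in> pos S \<and> prefix u (certificate S l u)"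
proof -
  have sp: "set (sub_preorder S u) = sub_nodes S u"
    unfolding sub_preorder_def sub_nodes_def by (simp add: set_preorder)
  from assms obtain v where "v \<in> sub_nodes S u" "l v < length u"
    unfolding sticky_def by blast
  hence "filter (\<lambda>v. l v < length u) (sub_preorder S u) \<noteq> []"
    using sp by (metis (mono_tags, lifting) filter_empty_conv)
  hence "certificate S l u \<in> set (filter (\<lambda>v. l v < length u) (sub_preorder S u))"
    unfolding certificate_def using list.set_sel(1) by blast
  hence "certificate S l u \<in> sub_nodes S u" using sp by auto
  thus ?thesis using sub_nodes_eq[OF assms(2)] by auto
qed

theorem mainTheorem5:
  fixes S :: ptree and l :: "nat list \<Rightarrow> nat"
  assumes "sticky S l"
  shows "is_closed_flow (children S) (\<lambda>v. int (cert_count S l v) - 1)"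
proof -
  define N where "N = pos S - {[]}"
  define cert where "cert = certificate S l"
  have finN: "finite N" unfolding N_def using finite_pos by auto
  have cp: "\<And>u. u \<in> N \<Longrightarrow> cert u \<in> N \<and> prefix u (cert u)"
    using cert_props[OF assms] unfolding N_def cert_def by (metis DiffD1 DiffD2 DiffI Nil_prefix prefix_order.antisym singletonD singletonI)
  have cc: "\<And>w. cert_count S l w = card {u \<in> N. cert u = w}"
    unfolding cert_count_def N_def cert_def by (rule arg_cong[where f=card]) auto
  have key: "\<And>W. W \<subseteq> N \<Longrightarrow> (\<Sum>w\<in>W. int (cert_count S l w) - 1)
      = int (card {u \<in> N. cert u \<in> W}) - int (card W)"
  proof -
    fix W assume W: "W \<subseteq> N"
    have finW: "finite W" using W finN finite_subset by blast
    have e: "{u \<in> N. cert u \<in> W} = (\<Union>w\<in>W. {u \<in> N. cert u = w})" by auto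
    have "card (\<Union>w\<in>W. {u \<in> N. cert u = w}) = (\<Sum>w\<in>W. card {u \<in> N. cert u = w})"
      by (rule card_UN_disjoint[OF finW]) (use finN in auto)
    hence "card {u \<in> N. cert u \<in> W} = (\<Sum>w\<in>W. card {u \<in> N. cert u = w})"
      using e by simp
    thus "(\<Sum>w\<in>W. int (cert_count S l w) - 1) = int (card {u \<in> N. cert u \<in> W}) - int (card W)"
      by (simp add: sum_subtractf cc)
  qed
  have ore: "\<And>v. out_rate (children S) (\<lambda>v. int (cert_count S l v) - 1) v
      = int (card {u \<in> N. cert u \<in> {w \<in> N. prefix v w}}) - int (card {w \<in> N. prefix v w})"
    unfolding out_rate_def forest_nodes_eq N_def[symmetric] by (rule key) auto
  have flow: "is_flow (children S) (\<lambda>v. int (cert_count S l v) - 1)"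
    unfolding is_flow_def
  proof (intro ballI conjI)
    fix v assume "v \<in> forest_nodes (children S)"
    show "- 1 \<le> int (cert_count S l v) - 1" by simp
    have "{w \<in> N. prefix v w} \<subseteq> {u \<in> N. cert u \<in> {w \<in> N. prefix v w}}"
      using cp by (auto intro: prefix_order.trans)
    hence "card {w \<in> N. prefix v w} \<le> card {u \<in> N. cert u \<in> {w \<in> N. prefix v w}}"
      by (rule card_mono[rotated]) (use finN in auto)
    thus "0 \<le> out_rate (children S) (\<lambda>v. int (cert_count S l v) - 1) v"
      using ore by simp
  qed
  have closed: "out_rate (children S) (\<lambda>v. int (cert_count S l v) - 1) [i] = 0" for i
  proof -
    have "{u \<in> N. cert u \<in> {w \<in> N. prefix [i] w}} = {w \<in> N. prefix [i] w}"
    proof (intro equalityI subsetI)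
      fix u assume u: "u \<in> {u \<in> N. cert u \<in> {w \<in> N. prefix [i] w}}"
      hence "u \<in> N" "prefix u (cert u)" "prefix [i] (cert u)" using cp by auto
      moreover have "u \<noteq> []" using \<open>u \<in> N\<close> N_def by auto
      ultimately have "prefix [i] u"
        by (metis prefix_Cons prefix_same_cases prefix_Nil)
      thus "u \<in> {w \<in> N. prefix [i] w}" using \<open>u \<in> N\<close> by auto
    next
      fix u assume "u \<in> {w \<in> N. prefix [i] w}"
      thus "u \<in> {u \<in> N. cert u \<in> {w \<in> N. prefix [i] w}}"
        using cp by (auto intro: prefix_order.trans)
    qed
    thus ?thesis using ore by simp
  qed
  show ?thesis unfolding is_closed_flow_def using flow closed by simp
qed

end
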